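(* Let $f(x,y)=\mathbb{E}_{\xi\sim\mathcal{D}}[f(x,y;\xi)]$ on $\mathbb{R}^d\times\mathbb{R}^p$ and assume: (A2) for every $\xi$, $\nabla_x f(\cdot,\cdot;\xi)$ and $\nabla_y f(\cdot,\cdot;\xi)$ are $L_f$-Lipschitz in each of the arguments $x$ and $y$ separately; (A3) $\mathbb{E}_\xi[\nabla f(x,y;\xi)]=\nabla f(x,y)$ and $\mathbb{E}_\xi\|\nabla f(x,y)-\nabla f(x,y;\xi)\|^2\le\sigma^2$ for all $x,y$. Let $\{x_t,y_t,\tilde x_t,\tilde y_t,v_t,w_t\}$ be generated by the MSGDA algorithm (see context). Then for all $t\ge1$, $$\mathbb{E}\|v_{t+1}-\nabla_y f(x_{t+1},y_{t+1})\|^2\le(1-\alpha_{t+1})\mathbb{E}\|v_t-\nabla_y f(x_t,y_t)\|^2+2\alpha_{t+1}^2\sigma^2+4L_f^2\eta_t^2\,\mathbb{E}\big(\|\tilde x_{t+1}-x_t\|^2+\|\tilde y_{t+1}-y_t\|^2\big),$$ $$\mathbb{E}\|w_{t+1}-\nabla_x f(x_{t+1},y_{t+1})\|^2\le(1-\beta_{t+1})\mathbb{E}\|w_t-\nabla_x f(x_t,y_t)\|^2+2\beta_{t+1}^2\sigma^2+4L_f^2\eta_t^2\,\mathbb{E}\big(\|\tilde x_{t+1}-x_t\|^2+\|\tilde y_{t+1}-y_t\|^2\big).$$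
   Context: MSGDA algorithm: given constants $\gamma,\lambda>0$, sequences $\eta_t>0$ and $\alpha_t,\beta_t\in(0,1]$, initial points $x_1,y_1$, and samples $\xi_1,\xi_2,\dots$ drawn i.i.d. from $\mathcal{D}$: set $v_1=\nabla_y f(x_1,y_1;\xi_1)$, $w_1=\nabla_x f(x_1,y_1;\xi_1)$, and for $t\ge1$: $\tilde y_{t+1}=y_t+\lambda v_t$, $\tilde x_{t+1}=x_t-\gamma w_t$; $y_{t+1}=y_t+\eta_t(\tilde y_{t+1}-y_t)$, $x_{t+1}=x_t+\eta_t(\tilde x_{t+1}-x_t)$; $v_{t+1}=\nabla_y f(x_{t+1},y_{t+1};\xi_{t+1})+(1-\alpha_{t+1})[v_t-\nabla_y f(x_t,y_t;\xi_{t+1})]$; $w_{t+1}=\nabla_x f(x_{t+1},y_{t+1};\xi_{t+1})+(1-\beta_{t+1})[w_t-\nabla_x f(x_t,y_t;\xi_{t+1})]$. *)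

theory Defs
  imports "HOL-Probability.Probability"
begin

text \<open>MSGDA iterates driven by a sample sequence s (s i is the sample xi_i, i >= 1).
  The state at index t (t >= 1) is (x_t, y_t, v_t, w_t); index 0 is unused and
  coincides with index 1.  gx / gy are the stochastic partial gradients
  nabla_x f(x,y;xi), nabla_y f(x,y;xi).\<close>

fun msgda ::
  "('x::real_vector \<Rightarrow> 'y::real_vector \<Rightarrow> 's \<Rightarrow> 'x) \<Rightarrow> ('x \<Rightarrow> 'y \<Rightarrow> 's \<Rightarrow> 'y) \<Rightarrow>
   real \<Rightarrow> real \<Rightarrow> (nat \<Rightarrow> real) \<Rightarrow> (nat \<Rightarrow> real) \<Rightarrow> (nat \<Rightarrow> real) \<Rightarrow>
   'x \<Rightarrow> 'y \<Rightarrow> (nat \<Rightarrow> 's) \<Rightarrow> nat \<Rightarrow> 'x \<times> 'y \<times> 'y \<times> 'x" where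
  "msgda gx gy \<gamma> lam \<eta> \<alpha> \<beta> x1 y1 s 0 = (x1, y1, gy x1 y1 (s 1), gx x1 y1 (s 1))"
| "msgda gx gy \<gamma> lam \<eta> \<alpha> \<beta> x1 y1 s (Suc 0) = (x1, y1, gy x1 y1 (s 1), gx x1 y1 (s 1))"
| "msgda gx gy \<gamma> lam \<eta> \<alpha> \<beta> x1 y1 s (Suc (Suc n)) =
    (case msgda gx gy \<gamma> lam \<eta> \<alpha> \<beta> x1 y1 s (Suc n) of (x, y, v, w) \<Rightarrow>
     (let t = Suc n;
          yt = y + lam *\<^sub>R v;
          xt = x - \<gamma> *\<^sub>R w;
          y' = y + \<eta> t *\<^sub>R (yt - y);
          x' = x + \<eta> t *\<^sub>R (xt - x);
          v' = gy x' y' (s (t + 1)) + (1 - \<alpha> (t + 1)) *\<^sub>R (v - gy x y (s (t + 1)));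
          w' = gx x' y' (s (t + 1)) + (1 - \<beta> (t + 1)) *\<^sub>R (w - gx x y (s (t + 1)))
      in (x', y', v', w')))"

definition msgda_x where
  "msgda_x gx gy \<gamma> lam \<eta> \<alpha> \<beta> x1 y1 s t = fst (msgda gx gy \<gamma> lam \<eta> \<alpha> \<beta> x1 y1 s t)"
definition msgda_y where
  "msgda_y gx gy \<gamma> lam \<eta> \<alpha> \<beta> x1 y1 s t = fst (snd (msgda gx gy \<gamma> lam \<eta> \<alpha> \<beta> x1 y1 s t))"
definition msgda_v where
  "msgda_v gx gy \<gamma> lam \<eta> \<alpha> \<beta> x1 y1 s t = fst (snd (snd (msgda gx gy \<gamma> lam \<eta> \<alpha> \<beta> x1 y1 s t)))"
definition msgda_w where
  "msgda_w gx gy \<gamma> lam \<eta> \<alpha> \<beta> x1 y1 s t = snd (snd (snd (msgda gx gy \<gamma> lam \<eta> \<alpha> \<beta> x1 y1 s t)))"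

fun msgda_xtil where
  "msgda_xtil gx gy \<gamma> lam \<eta> \<alpha> \<beta> x1 y1 s 0 = x1"
| "msgda_xtil gx gy \<gamma> lam \<eta> \<alpha> \<beta> x1 y1 s (Suc t) =
     msgda_x gx gy \<gamma> lam \<eta> \<alpha> \<beta> x1 y1 s t - \<gamma> *\<^sub>R msgda_w gx gy \<gamma> lam \<eta> \<alpha> \<beta> x1 y1 s t"
fun msgda_ytil where
  "msgda_ytil gx gy \<gamma> lam \<eta> \<alpha> \<beta> x1 y1 s 0 = y1"
| "msgda_ytil gx gy \<gamma> lam \<eta> \<alpha> \<beta> x1 y1 s (Suc t) =
     msgda_y gx gy \<gamma> lam \<eta> \<alpha> \<beta> x1 y1 s t + lam *\<^sub>R msgda_v gx gy \<gamma> lam \<eta> \<alpha> \<beta> x1 y1 s t"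

end

theory Submission
  imports Defs
begin


definition nxt where
 "nxt gx gy \<gamma> lam \<eta> \<alpha> \<beta> t z s =
    (case z of (x, y, v, w) \<Rightarrow>
     (let yt = y + lam *\<^sub>R v;
          xt = x - \<gamma> *\<^sub>R w;
          y' = y + \<eta> t *\<^sub>R (yt - y);
          x' = x + \<eta> t *\<^sub>R (xt - x);
          v' = gy x' y' s + (1 - \<alpha> (t + 1)) *\<^sub>R (v - gy x y s);
          w' = gx x' y' s + (1 - \<beta> (t + 1)) *\<^sub>R (w - gx x y s)
      in (x', y', v', w')))"

lemma msgda_SS: "msgda gx gy \<gamma> lam \<eta> \<alpha> \<beta> x1 y1 s (Suc (Suc n)) =
   nxt gx gy \<gamma> lam \<eta> \<alpha> \<beta> (Suc n) (msgda gx gy \<gamma> lam \<eta> \<alpha> \<beta> x1 y1 s (Suc n)) (s (Suc (Suc n)))"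
  by (simp add: nxt_def split: prod.split)

lemma nxt_eq:
  fixes gx :: "'x::real_vector \<Rightarrow> 'y::real_vector \<Rightarrow> 's \<Rightarrow> 'x" and gy :: "'x \<Rightarrow> 'y \<Rightarrow> 's \<Rightarrow> 'y"
  shows "nxt gx gy \<gamma> lam \<eta> \<alpha> \<beta> t z s =
   (fst z - (\<eta> t * \<gamma>) *\<^sub>R snd (snd (snd z)),
    fst (snd z) + (\<eta> t * lam) *\<^sub>R fst (snd (snd z)),
    gy (fst z - (\<eta> t * \<gamma>) *\<^sub>R snd (snd (snd z))) (fst (snd z) + (\<eta> t * lam) *\<^sub>R fst (snd (snd z))) s
      + (1 - \<alpha> (t + 1)) *\<^sub>R (fst (snd (snd z)) - gy (fst z) (fst (snd z)) s),
    gx (fst z - (\<eta> t * \<gamma>) *\<^sub>R snd (snd (snd z))) (fst (snd z) + (\<eta> t * lam) *\<^sub>R fst (snd (snd z))) s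
      + (1 - \<beta> (t + 1)) *\<^sub>R (snd (snd (snd z)) - gx (fst z) (fst (snd z)) s))"
proof -
  have e: "\<And>(a::'x) b c. a + c *\<^sub>R (a - b *\<^sub>R d - a) = a - (c * b) *\<^sub>R d" for d
    by (simp add: algebra_simps)
  have e2: "\<And>(a::'y) b c. a + c *\<^sub>R (a + b *\<^sub>R d - a) = a + (c * b) *\<^sub>R d" for d
    by (simp add: algebra_simps)
  show ?thesis by (cases z) (simp add: nxt_def Let_def e e2)
qed

lemma msgda_cong: "1 \<le> n \<Longrightarrow> (\<And>i. 1 \<le> i \<Longrightarrow> i \<le> n \<Longrightarrow> s i = s' i) \<Longrightarrow>
   msgda gx gy \<gamma> lam \<eta> \<alpha> \<beta> x1 y1 s n = msgda gx gy \<gamma> lam \<eta> \<alpha> \<beta> x1 y1 s' n"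
proof (induction n rule: less_induct)
  case (less n)
  show ?case
  proof (cases n)
    case (Suc m)
    show ?thesis
    proof (cases m)
      case (Suc k)
      have "msgda gx gy \<gamma> lam \<eta> \<alpha> \<beta> x1 y1 s m = msgda gx gy \<gamma> lam \<eta> \<alpha> \<beta> x1 y1 s' m"
        using less \<open>n = Suc m\<close> \<open>m = Suc k\<close> by auto
      moreover have "s n = s' n" using less \<open>n = Suc m\<close> by auto
      ultimately show ?thesis using \<open>n = Suc m\<close> Suc by (simp only: msgda_SS)
    qed (use less Suc in auto)
  qed (use less in auto)
qed

lemma g_comp_meas:
  fixes g :: "'x::euclidean_space \<Rightarrow> 'y::euclidean_space \<Rightarrow> 's \<Rightarrow> 'z::euclidean_space"
  assumes g: "(\<lambda>(z, s). g (fst z) (snd z) s) \<in> borel_measurable (borel \<Otimes>\<^sub>M D)"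
    and a: "a \<in> borel_measurable N" and b: "b \<in> borel_measurable N" and c: "c \<in> measurable N D"
  shows "(\<lambda>p. g (a p) (b p) (c p)) \<in> borel_measurable N"
proof -
  have "(\<lambda>p. (a p, b p)) \<in> borel_measurable N"
    using a b by (simp add: borel_prod[symmetric])
  then have "(\<lambda>p. ((a p, b p), c p)) \<in> measurable N (borel \<Otimes>\<^sub>M D)"
    using c by (rule measurable_Pair)
  from measurable_comp[OF this g] show ?thesis by (simp add: o_def)
qed

lemma nxt_meas:
  fixes gx :: "'x::euclidean_space \<Rightarrow> 'y::euclidean_space \<Rightarrow> 's \<Rightarrow> 'x" and gy :: "'x \<Rightarrow> 'y \<Rightarrow> 's \<Rightarrow> 'y"
  assumes gx: "(\<lambda>(z, s). gx (fst z) (snd z) s) \<in> borel_measurable (borel \<Otimes>\<^sub>M D)"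
    and gy: "(\<lambda>(z, s). gy (fst z) (snd z) s) \<in> borel_measurable (borel \<Otimes>\<^sub>M D)"
    and z: "z \<in> borel_measurable N" and s: "s \<in> measurable N D"
  shows "(\<lambda>b. nxt gx gy \<gamma> lam \<eta> \<alpha> \<beta> t (z b) (s b)) \<in> borel_measurable N"
proof -
  have z': "z \<in> measurable N (borel \<Otimes>\<^sub>M (borel \<Otimes>\<^sub>M (borel \<Otimes>\<^sub>M borel)))"
    using z by (simp add: borel_prod)
  note [measurable] = z' s
  have X: "(\<lambda>b. fst (z b) - (\<eta> t * \<gamma>) *\<^sub>R snd (snd (snd (z b)))) \<in> borel_measurable N"
    by measurable
  have Y: "(\<lambda>b. fst (snd (z b)) + (\<eta> t * lam) *\<^sub>R fst (snd (snd (z b)))) \<in> borel_measurable N"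
    by measurable
  have x0: "(\<lambda>b. fst (z b)) \<in> borel_measurable N" "(\<lambda>b. fst (snd (z b))) \<in> borel_measurable N"
    by measurable
  note G = g_comp_meas[OF gx X Y s] g_comp_meas[OF gy X Y s] g_comp_meas[OF gx x0 s] g_comp_meas[OF gy x0 s]
  note [measurable] = X Y G
  show ?thesis unfolding nxt_eq by (simp add: borel_prod[symmetric])
qed

lemma msgda_meas:
  fixes gx :: "'x::euclidean_space \<Rightarrow> 'y::euclidean_space \<Rightarrow> 's \<Rightarrow> 'x" and gy :: "'x \<Rightarrow> 'y \<Rightarrow> 's \<Rightarrow> 'y"
  assumes gx: "(\<lambda>(z, s). gx (fst z) (snd z) s) \<in> borel_measurable (borel \<Otimes>\<^sub>M D)"
    and gy: "(\<lambda>(z, s). gy (fst z) (snd z) s) \<in> borel_measurable (borel \<Otimes>\<^sub>M D)"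
    and s: "\<And>i. 1 \<le> i \<Longrightarrow> i \<le> n \<Longrightarrow> (\<lambda>b. s b i) \<in> measurable N D"
    and n: "1 \<le> n"
  shows "(\<lambda>b. msgda gx gy \<gamma> lam \<eta> \<alpha> \<beta> x1 y1 (s b) n) \<in> borel_measurable N"
  using s n
proof (induction n rule: nat_less_induct)
  case (1 n)
  show ?case
  proof (cases n)
    case 0
    then show ?thesis using 1 by simp
  next
    case (Suc m)
    show ?thesis
    proof (cases m)
      case 0
      have s1: "(\<lambda>b. s b (Suc 0)) \<in> measurable N D" using 1 Suc 0 by auto
      have c: "(\<lambda>b. x1) \<in> borel_measurable N" "(\<lambda>b. y1) \<in> borel_measurable N" by auto
      note [measurable] = g_comp_meas[OF gx c s1] g_comp_meas[OF gy c s1]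
      show ?thesis using Suc 0 by (simp add: borel_prod[symmetric])
    next
      case (Suc k)
      have ih: "(\<lambda>b. msgda gx gy \<gamma> lam \<eta> \<alpha> \<beta> x1 y1 (s b) m) \<in> borel_measurable N"
        using 1 \<open>n = Suc m\<close> Suc by auto
      have sn: "(\<lambda>b. s b n) \<in> measurable N D" using 1 by auto
      show ?thesis using nxt_meas[OF gx gy ih sn] \<open>n = Suc m\<close> Suc by (simp only: msgda_SS)
    qed
  qed
qed

lemma sq_tri: "(norm (x + y))\<^sup>2 \<le> 2 * (norm x)\<^sup>2 + 2 * (norm (y::'v::real_normed_vector))\<^sup>2"
proof -
  have "norm (x + y) \<le> norm x + norm y" by (rule norm_triangle_ineq)
  then have "(norm (x + y))\<^sup>2 \<le> (norm x + norm y)\<^sup>2" by (simp add: power_mono)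
  also have "\<dots> \<le> 2 * (norm x)\<^sup>2 + 2 * (norm y)\<^sup>2" by (simp add: power2_sum) (smt (verit) sum_squares_bound)
  finally show ?thesis .
qed

lemma core:
  fixes g1 g2 :: "'s \<Rightarrow> 'v::euclidean_space"
  assumes D: "prob_space D"
    and i1: "integrable D g1" and i2: "integrable D g2"
    and q1: "integrable D (\<lambda>s. (norm (G1 - g1 s))\<^sup>2)"
    and G1: "G1 = (\<integral>s. g1 s \<partial>D)" and G2: "G2 = (\<integral>s. g2 s \<partial>D)"
    and var: "(\<integral>s. (norm (G1 - g1 s))\<^sup>2 \<partial>D) \<le> \<sigma>\<^sup>2"
    and K: "\<forall>s\<in>space D. norm (g1 s - g2 s) \<le> K"
    and a: "0 \<le> a" "a \<le> 1"
  shows "integrable D (\<lambda>s. (norm (g1 s + (1 - a) *\<^sub>R (v - g2 s) - G1))\<^sup>2) \<and>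
    (\<integral>s. (norm (g1 s + (1 - a) *\<^sub>R (v - g2 s) - G1))\<^sup>2 \<partial>D)
      \<le> (1 - a) * (norm (v - G2))\<^sup>2 + 2 * a\<^sup>2 * \<sigma>\<^sup>2 + 2 * (1 - a)\<^sup>2 * K\<^sup>2"
proof -
  interpret D: prob_space D by fact
  define c where "c = 1 - a"
  define e where "e = v - G2"
  define P where "P s = g1 s - G1" for s
  define Q where "Q s = (g1 s - g2 s) - (G1 - G2)" for s
  define B where "B s = a *\<^sub>R P s + c *\<^sub>R Q s" for s
  have m1[measurable]: "g1 \<in> borel_measurable D" using i1 by auto
  have m2[measurable]: "g2 \<in> borel_measurable D" using i2 by auto
  have iP: "integrable D P" unfolding P_def using i1 by auto
  have iQ: "integrable D Q" unfolding Q_def using i1 i2 by auto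
  have iB: "integrable D B" unfolding B_def using iP iQ by auto
  have EP: "integral\<^sup>L D P = 0" unfolding P_def using i1 G1 by (simp add: D.prob_space)
  have EQ: "integral\<^sup>L D Q = 0" unfolding Q_def using i1 i2 G1 G2 by (simp add: D.prob_space)
  have EB: "integral\<^sup>L D B = 0" unfolding B_def using iP iQ EP EQ by simp
  have mP[measurable]: "P \<in> borel_measurable D" unfolding P_def by measurable
  have mQ[measurable]: "Q \<in> borel_measurable D" unfolding Q_def by measurable
  have mB[measurable]: "B \<in> borel_measurable D" unfolding B_def by measurable
  have iP2: "integrable D (\<lambda>s. (norm (P s))\<^sup>2)"
    using q1 unfolding P_def by (simp add: norm_minus_commute)
  have EP2: "(\<integral>s. (norm (P s))\<^sup>2 \<partial>D) \<le> \<sigma>\<^sup>2"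
    using var unfolding P_def by (simp add: norm_minus_commute)
  define d where "d = G1 - G2"
  have Qd: "Q s = (g1 s - g2 s) - d" for s unfolding Q_def d_def by simp
  have Ed: "(\<integral>s. (g1 s - g2 s) \<partial>D) = d" unfolding d_def G1 G2 using i1 i2 by simp
  have iD: "integrable D (\<lambda>s. g1 s - g2 s)" using i1 i2 by auto
  have iD2: "integrable D (\<lambda>s. (norm (g1 s - g2 s))\<^sup>2)"
    by (rule D.integrable_const_bound[where B="K\<^sup>2"]) (use K in \<open>auto intro!: AE_I2 power_mono\<close>)
  have ED2: "(\<integral>s. (norm (g1 s - g2 s))\<^sup>2 \<partial>D) \<le> K\<^sup>2"
    by (rule D.integral_le_const[OF iD2]) (use K in \<open>auto intro!: AE_I2 power_mono\<close>)
  have Q2eq: "(norm (Q s))\<^sup>2 = (norm (g1 s - g2 s))\<^sup>2 - 2 * ((g1 s - g2 s) \<bullet> d) + (norm d)\<^sup>2" for s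
    unfolding Qd power2_norm_eq_inner by (simp add: inner_diff_left inner_diff_right inner_commute)
  have iQ2: "integrable D (\<lambda>s. (norm (Q s))\<^sup>2)"
    unfolding Q2eq using iD2 iD by auto
  have EQ2: "(\<integral>s. (norm (Q s))\<^sup>2 \<partial>D) \<le> K\<^sup>2"
  proof -
    have "(\<integral>s. (norm (Q s))\<^sup>2 \<partial>D) = (\<integral>s. (norm (g1 s - g2 s))\<^sup>2 \<partial>D) - 2 * (d \<bullet> d) + (norm d)\<^sup>2"
      unfolding Q2eq using iD2 iD by (simp add: Ed D.prob_space)
    also have "\<dots> = (\<integral>s. (norm (g1 s - g2 s))\<^sup>2 \<partial>D) - (norm d)\<^sup>2"
      by (simp add: power2_norm_eq_inner)
    finally show ?thesis using ED2 by (smt (verit) zero_le_power2)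
  qed
  have B2le: "(norm (B s))\<^sup>2 \<le> 2 * a\<^sup>2 * (norm (P s))\<^sup>2 + 2 * c\<^sup>2 * (norm (Q s))\<^sup>2" for s
    using sq_tri[of "a *\<^sub>R P s" "c *\<^sub>R Q s"] unfolding B_def
    by (simp add: power_mult_distrib)
  have iB2: "integrable D (\<lambda>s. (norm (B s))\<^sup>2)"
  proof -
    have "integrable D (\<lambda>s. 2 * a\<^sup>2 * (norm (P s))\<^sup>2 + 2 * c\<^sup>2 * (norm (Q s))\<^sup>2)"
      using iP2 iQ2 by auto
    then show ?thesis
      by (rule Bochner_Integration.integrable_bound) (use B2le in \<open>auto intro!: AE_I2 order.trans[OF _ abs_ge_self]\<close>)
  qed
  have EB2: "(\<integral>s. (norm (B s))\<^sup>2 \<partial>D) \<le> 2 * a\<^sup>2 * \<sigma>\<^sup>2 + 2 * c\<^sup>2 * K\<^sup>2"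
  proof -
    have "(\<integral>s. (norm (B s))\<^sup>2 \<partial>D) \<le> (\<integral>s. 2 * a\<^sup>2 * (norm (P s))\<^sup>2 + 2 * c\<^sup>2 * (norm (Q s))\<^sup>2 \<partial>D)"
      by (rule integral_mono) (use iB2 iP2 iQ2 B2le in auto)
    also have "\<dots> = 2 * a\<^sup>2 * (\<integral>s. (norm (P s))\<^sup>2 \<partial>D) + 2 * c\<^sup>2 * (\<integral>s. (norm (Q s))\<^sup>2 \<partial>D)"
      using iP2 iQ2 by simp
    also have "\<dots> \<le> 2 * a\<^sup>2 * \<sigma>\<^sup>2 + 2 * c\<^sup>2 * K\<^sup>2"
      using EP2 EQ2 by (intro add_mono mult_left_mono) auto
    finally show ?thesis .
  qed
  have expr: "g1 s + (1 - a) *\<^sub>R (v - g2 s) - G1 = c *\<^sub>R e + B s" for s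
    unfolding B_def P_def Q_def c_def e_def by (simp add: algebra_simps)
  have sq: "(norm (c *\<^sub>R e + B s))\<^sup>2 = c\<^sup>2 * (norm e)\<^sup>2 + 2 * c * (e \<bullet> B s) + (norm (B s))\<^sup>2" for s
    unfolding power2_norm_eq_inner
    by (simp add: inner_add_left inner_add_right inner_commute power2_eq_square algebra_simps)
  have iall: "integrable D (\<lambda>s. c\<^sup>2 * (norm e)\<^sup>2 + 2 * c * (e \<bullet> B s) + (norm (B s))\<^sup>2)"
    using iB iB2 by auto
  have Eall: "(\<integral>s. c\<^sup>2 * (norm e)\<^sup>2 + 2 * c * (e \<bullet> B s) + (norm (B s))\<^sup>2 \<partial>D)
      = c\<^sup>2 * (norm e)\<^sup>2 + (\<integral>s. (norm (B s))\<^sup>2 \<partial>D)"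
    using iB iB2 EB by (simp add: D.prob_space)
  have cc: "c\<^sup>2 * (norm e)\<^sup>2 \<le> c * (norm e)\<^sup>2"
  proof -
    have "(1 - a) * (1 - a) \<le> 1 * (1 - a)" using a by (intro mult_right_mono) auto
    then show ?thesis unfolding c_def by (intro mult_right_mono) (auto simp: power2_eq_square)
  qed
  show ?thesis
    unfolding expr sq using iall Eall EB2 cc unfolding c_def e_def by simp
qed

definition SQ :: "'a measure \<Rightarrow> ('a \<Rightarrow> 'b::euclidean_space) \<Rightarrow> bool" where
  "SQ N f \<longleftrightarrow> f \<in> borel_measurable N \<and> integrable N (\<lambda>\<omega>. (norm (f \<omega>))\<^sup>2)"

lemma SQ_bound:
  fixes f :: "'a \<Rightarrow> 'b::euclidean_space" and g :: "'a \<Rightarrow> 'c::euclidean_space"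
  assumes "SQ N f" "g \<in> borel_measurable N" "\<And>\<omega>. \<omega> \<in> space N \<Longrightarrow> norm (g \<omega>) \<le> norm (f \<omega>)"
  shows "SQ N g"
  unfolding SQ_def
proof
  show "g \<in> borel_measurable N" by fact
  have "integrable N (\<lambda>\<omega>. (norm (f \<omega>))\<^sup>2)" using assms(1) by (simp add: SQ_def)
  then show "integrable N (\<lambda>\<omega>. (norm (g \<omega>))\<^sup>2)"
    by (rule Bochner_Integration.integrable_bound) (use assms in \<open>auto intro!: AE_I2 power_mono\<close>)
qed

lemma SQ_const: "finite_measure N \<Longrightarrow> SQ N (\<lambda>_. c)"
  unfolding SQ_def by (simp add: finite_measure.integrable_const)

lemma SQ_add:
  fixes f g :: "'a \<Rightarrow> 'b::euclidean_space"
  assumes f: "SQ N f" and g: "SQ N g"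
  shows "SQ N (\<lambda>\<omega>. f \<omega> + g \<omega>)"
  unfolding SQ_def
proof
  have [measurable]: "f \<in> borel_measurable N" "g \<in> borel_measurable N" using f g by (auto simp: SQ_def)
  show "(\<lambda>\<omega>. f \<omega> + g \<omega>) \<in> borel_measurable N" by measurable
  have "integrable N (\<lambda>\<omega>. 2 * (norm (f \<omega>))\<^sup>2 + 2 * (norm (g \<omega>))\<^sup>2)" using f g by (auto simp: SQ_def)
  then show "integrable N (\<lambda>\<omega>. (norm (f \<omega> + g \<omega>))\<^sup>2)"
    by (rule Bochner_Integration.integrable_bound)
       (auto intro!: AE_I2 order.trans[OF sq_tri] simp: add_nonneg_nonneg)
qed

lemma SQ_scaleR:
  fixes f :: "'a \<Rightarrow> 'b::euclidean_space"
  assumes f: "SQ N f"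
  shows "SQ N (\<lambda>\<omega>. c *\<^sub>R f \<omega>)"
  unfolding SQ_def
proof
  have [measurable]: "f \<in> borel_measurable N" using f by (auto simp: SQ_def)
  show "(\<lambda>\<omega>. c *\<^sub>R f \<omega>) \<in> borel_measurable N" by measurable
  have "integrable N (\<lambda>\<omega>. c\<^sup>2 * (norm (f \<omega>))\<^sup>2)" using f by (auto simp: SQ_def)
  then show "integrable N (\<lambda>\<omega>. (norm (c *\<^sub>R f \<omega>))\<^sup>2)"
    by (simp add: power_mult_distrib)
qed

lemma SQ_diff:
  fixes f g :: "'a \<Rightarrow> 'b::euclidean_space"
  assumes f: "SQ N f" and g: "SQ N g"
  shows "SQ N (\<lambda>\<omega>. f \<omega> - g \<omega>)"
  using SQ_add[OF f SQ_scaleR[OF g, of "-1"]] by simp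

lemma SQ_norm:
  fixes f :: "'a \<Rightarrow> 'b::euclidean_space"
  assumes f: "SQ N f"
  shows "SQ N (\<lambda>\<omega>. norm (f \<omega>))"
  using f by (auto simp: SQ_def)

lemma SQ_Pair:
  fixes f :: "'a \<Rightarrow> 'b::euclidean_space" and g :: "'a \<Rightarrow> 'c::euclidean_space"
  assumes f: "SQ N f" and g: "SQ N g"
  shows "SQ N (\<lambda>\<omega>. (f \<omega>, g \<omega>))"
proof -
  have [measurable]: "f \<in> borel_measurable N" "g \<in> borel_measurable N" using f g by (auto simp: SQ_def)
  have "SQ N (\<lambda>\<omega>. norm (f \<omega>) + norm (g \<omega>))" by (intro SQ_add SQ_norm f g)
  then show ?thesis
    by (rule SQ_bound) (auto simp: borel_prod[symmetric] intro: order.trans[OF norm_Pair_le])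
qed

lemma SQ_fst:
  fixes f :: "'a \<Rightarrow> 'b::euclidean_space \<times> 'c::euclidean_space"
  assumes f: "SQ N f" shows "SQ N (\<lambda>\<omega>. fst (f \<omega>))"
proof -
  have "f \<in> measurable N (borel \<Otimes>\<^sub>M borel)" using f by (simp add: SQ_def borel_prod)
  then have [measurable]: "(\<lambda>\<omega>. fst (f \<omega>)) \<in> borel_measurable N" by measurable
  show ?thesis using f by (rule SQ_bound) (simp_all, metis norm_fst_le prod.collapse)
qed

lemma SQ_snd:
  fixes f :: "'a \<Rightarrow> 'b::euclidean_space \<times> 'c::euclidean_space"
  assumes f: "SQ N f" shows "SQ N (\<lambda>\<omega>. snd (f \<omega>))"
proof -
  have "f \<in> measurable N (borel \<Otimes>\<^sub>M borel)" using f by (simp add: SQ_def borel_prod)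
  then have [measurable]: "(\<lambda>\<omega>. snd (f \<omega>)) \<in> borel_measurable N" by measurable
  show ?thesis using f by (rule SQ_bound) (simp_all, metis norm_snd_le prod.collapse)
qed

locale msetup =
  fixes M :: "'a measure" and D :: "'s measure"
    and \<xi> :: "nat \<Rightarrow> 'a \<Rightarrow> 's"
    and gx :: "real^'d \<Rightarrow> real^'p \<Rightarrow> 's \<Rightarrow> real^'d"
    and gy :: "real^'d \<Rightarrow> real^'p \<Rightarrow> 's \<Rightarrow> real^'p"
    and Gx :: "real^'d \<Rightarrow> real^'p \<Rightarrow> real^'d"
    and Gy :: "real^'d \<Rightarrow> real^'p \<Rightarrow> real^'p"
    and \<gamma> lam Lf \<sigma> :: real and \<eta> \<alpha> \<beta> :: "nat \<Rightarrow> real"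
    and x1 :: "real^'d" and y1 :: "real^'p"
  assumes M: "prob_space M"
    and iid_indep: "prob_space.indep_vars M (\<lambda>_. D) \<xi> {1..}"
    and iid_distr: "\<forall>i\<ge>1. distr M D (\<xi> i) = D"
    and steps: "\<forall>k. 0 < \<alpha> k \<and> \<alpha> k \<le> 1" "\<forall>k. 0 < \<beta> k \<and> \<beta> k \<le> 1"
    and gx_meas: "(\<lambda>(z, s). gx (fst z) (snd z) s) \<in> borel_measurable (borel \<Otimes>\<^sub>M D)"
    and gy_meas: "(\<lambda>(z, s). gy (fst z) (snd z) s) \<in> borel_measurable (borel \<Otimes>\<^sub>M D)"
    and A2_gx: "\<forall>s\<in>space D. \<forall>x x' y y'.
        norm (gx x y s - gx x' y s) \<le> Lf * norm (x - x') \<and>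
        norm (gx x y s - gx x y' s) \<le> Lf * norm (y - y')"
    and A2_gy: "\<forall>s\<in>space D. \<forall>x x' y y'.
        norm (gy x y s - gy x' y s) \<le> Lf * norm (x - x') \<and>
        norm (gy x y s - gy x y' s) \<le> Lf * norm (y - y')"
    and A3_unbiased: "\<forall>x y. integrable D (gx x y) \<and> integrable D (gy x y) \<and>
        Gx x y = (\<integral>s. gx x y s \<partial>D) \<and> Gy x y = (\<integral>s. gy x y s \<partial>D)"
    and A3_var: "\<forall>x y.
        integrable D (\<lambda>s. (norm ((Gx x y, Gy x y) - (gx x y s, gy x y s)))\<^sup>2) \<and>
        (\<integral>s. (norm ((Gx x y, Gy x y) - (gx x y s, gy x y s)))\<^sup>2 \<partial>D) \<le> \<sigma>\<^sup>2"
begin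

interpretation P: prob_space M by (rule M)

lemma xi_meas: "1 \<le> i \<Longrightarrow> \<xi> i \<in> measurable M D"
  using iid_indep by (auto simp: P.indep_vars_def)

lemma D_prob: "prob_space D"
  using P.prob_space_distr[OF xi_meas[of 1]] iid_distr by auto

interpretation DP: prob_space D by (rule D_prob)

lemma gy_Lip: "s \<in> space D \<Longrightarrow> norm (gy x y s - gy x' y' s) \<le> Lf * (norm (x - x') + norm (y - y'))"
proof -
  assume s: "s \<in> space D"
  have "norm (gy x y s - gy x' y' s) \<le> norm (gy x y s - gy x' y s) + norm (gy x' y s - gy x' y' s)"
    using norm_triangle_ineq[of "gy x y s - gy x' y s" "gy x' y s - gy x' y' s"] by simp
  also have "\<dots> \<le> Lf * norm (x - x') + Lf * norm (y - y')" using A2_gy s by (intro add_mono) auto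
  finally show ?thesis by (simp add: algebra_simps)
qed

lemma gx_Lip: "s \<in> space D \<Longrightarrow> norm (gx x y s - gx x' y' s) \<le> Lf * (norm (x - x') + norm (y - y'))"
proof -
  assume s: "s \<in> space D"
  have "norm (gx x y s - gx x' y' s) \<le> norm (gx x y s - gx x' y s) + norm (gx x' y s - gx x' y' s)"
    using norm_triangle_ineq[of "gx x y s - gx x' y s" "gx x' y s - gx x' y' s"] by simp
  also have "\<dots> \<le> Lf * norm (x - x') + Lf * norm (y - y')" using A2_gx s by (intro add_mono) auto
  finally show ?thesis by (simp add: algebra_simps)
qed

lemma Lf_nonneg: "0 \<le> Lf"
proof -
  obtain s where s: "s \<in> space D" using DP.not_empty by auto
  have "norm (gy 0 y1 s - gy (axis undefined 1) y1 s) \<le> Lf * norm (0 - axis undefined (1::real) :: real^'d)"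
    using A2_gy s by blast
  moreover have "norm (0 - axis undefined (1::real) :: real^'d) > 0" by (simp add: axis_eq_0_iff)
  ultimately have "0 \<le> Lf * norm (0 - axis undefined (1::real) :: real^'d)" "norm (0 - axis undefined (1::real) :: real^'d) > 0"
    using norm_ge_zero order.trans by blast+
  then show ?thesis by (simp add: zero_le_mult_iff)
qed

lemma var_y: "integrable D (\<lambda>s. (norm (Gy x y - gy x y s))\<^sup>2) \<and> (\<integral>s. (norm (Gy x y - gy x y s))\<^sup>2 \<partial>D) \<le> \<sigma>\<^sup>2"
proof -
  have m: "gy x y \<in> borel_measurable D" "gx x y \<in> borel_measurable D"
    using A3_unbiased by (auto intro: borel_measurable_integrable)
  have le: "(norm (Gy x y - gy x y s))\<^sup>2 \<le> (norm ((Gx x y, Gy x y) - (gx x y s, gy x y s)))\<^sup>2" for s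
    by (simp add: norm_Pair)
  have i: "integrable D (\<lambda>s. (norm (Gy x y - gy x y s))\<^sup>2)"
    using A3_var[rule_format, of x y] apply (elim conjE)
    by (erule Bochner_Integration.integrable_bound) (use m le in \<open>auto intro!: AE_I2\<close>)
  have "(\<integral>s. (norm (Gy x y - gy x y s))\<^sup>2 \<partial>D) \<le> (\<integral>s. (norm ((Gx x y, Gy x y) - (gx x y s, gy x y s)))\<^sup>2 \<partial>D)"
    using A3_var i le by (intro integral_mono) auto
  then show ?thesis using i A3_var by (meson order.trans)
qed

lemma var_x: "integrable D (\<lambda>s. (norm (Gx x y - gx x y s))\<^sup>2) \<and> (\<integral>s. (norm (Gx x y - gx x y s))\<^sup>2 \<partial>D) \<le> \<sigma>\<^sup>2"
proof -
  have m: "gy x y \<in> borel_measurable D" "gx x y \<in> borel_measurable D"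
    using A3_unbiased by (auto intro: borel_measurable_integrable)
  have le: "(norm (Gx x y - gx x y s))\<^sup>2 \<le> (norm ((Gx x y, Gy x y) - (gx x y s, gy x y s)))\<^sup>2" for s
    by (simp add: norm_Pair)
  have i: "integrable D (\<lambda>s. (norm (Gx x y - gx x y s))\<^sup>2)"
    using A3_var[rule_format, of x y] apply (elim conjE)
    by (erule Bochner_Integration.integrable_bound) (use m le in \<open>auto intro!: AE_I2\<close>)
  have "(\<integral>s. (norm (Gx x y - gx x y s))\<^sup>2 \<partial>D) \<le> (\<integral>s. (norm ((Gx x y, Gy x y) - (gx x y s, gy x y s)))\<^sup>2 \<partial>D)"
    using A3_var i le by (intro integral_mono) auto
  then show ?thesis using i A3_var by (meson order.trans)
qed

lemma Gy_Lip: "norm (Gy x y - Gy x' y') \<le> Lf * (norm (x - x') + norm (y - y'))"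
proof -
  have i: "integrable D (gy x y)" "integrable D (gy x' y')" using A3_unbiased by auto
  have "Gy x y - Gy x' y' = (\<integral>s. gy x y s - gy x' y' s \<partial>D)" using A3_unbiased i by simp
  then have "norm (Gy x y - Gy x' y') \<le> (\<integral>s. norm (gy x y s - gy x' y' s) \<partial>D)"
    by (simp add: integral_norm_bound)
  also have "\<dots> \<le> Lf * (norm (x - x') + norm (y - y'))"
    using i gy_Lip by (intro DP.integral_le_const) (auto intro!: AE_I2)
  finally show ?thesis .
qed

lemma Gx_Lip: "norm (Gx x y - Gx x' y') \<le> Lf * (norm (x - x') + norm (y - y'))"
proof -
  have i: "integrable D (gx x y)" "integrable D (gx x' y')" using A3_unbiased by auto
  have "Gx x y - Gx x' y' = (\<integral>s. gx x y s - gx x' y' s \<partial>D)" using A3_unbiased i by simp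
  then have "norm (Gx x y - Gx x' y') \<le> (\<integral>s. norm (gx x y s - gx x' y' s) \<partial>D)"
    by (simp add: integral_norm_bound)
  also have "\<dots> \<le> Lf * (norm (x - x') + norm (y - y'))"
    using i gx_Lip by (intro DP.integral_le_const) (auto intro!: AE_I2)
  finally show ?thesis .
qed

lemma Gy_meas0: "(\<lambda>z. Gy (fst z) (snd z)) \<in> borel_measurable borel"
proof -
  have "(\<lambda>z. \<integral>s. gy (fst z) (snd z) s \<partial>D) \<in> borel_measurable borel"
    by (rule DP.borel_measurable_lebesgue_integral) (use gy_meas in simp)
  then show ?thesis using A3_unbiased by simp
qed

lemma Gx_meas0: "(\<lambda>z. Gx (fst z) (snd z)) \<in> borel_measurable borel"
proof -
  have "(\<lambda>z. \<integral>s. gx (fst z) (snd z) s \<partial>D) \<in> borel_measurable borel"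
    by (rule DP.borel_measurable_lebesgue_integral) (use gx_meas in simp)
  then show ?thesis using A3_unbiased by simp
qed

lemma Gy_meas: "a \<in> borel_measurable N \<Longrightarrow> b \<in> borel_measurable N \<Longrightarrow> (\<lambda>\<omega>. Gy (a \<omega>) (b \<omega>)) \<in> borel_measurable N"
proof -
  assume a: "a \<in> borel_measurable N" and b: "b \<in> borel_measurable N"
  have "(\<lambda>\<omega>. (a \<omega>, b \<omega>)) \<in> borel_measurable N" using a b by (simp add: borel_prod[symmetric])
  from measurable_comp[OF this Gy_meas0] show ?thesis by (simp add: o_def)
qed

lemma Gx_meas: "a \<in> borel_measurable N \<Longrightarrow> b \<in> borel_measurable N \<Longrightarrow> (\<lambda>\<omega>. Gx (a \<omega>) (b \<omega>)) \<in> borel_measurable N"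
proof -
  assume a: "a \<in> borel_measurable N" and b: "b \<in> borel_measurable N"
  have "(\<lambda>\<omega>. (a \<omega>, b \<omega>)) \<in> borel_measurable N" using a b by (simp add: borel_prod[symmetric])
  from measurable_comp[OF this Gx_meas0] show ?thesis by (simp add: o_def)
qed

lemma SQ_D_gy: "SQ D (gy x y)"
proof -
  have m: "gy x y \<in> borel_measurable D" using A3_unbiased by (auto intro: borel_measurable_integrable)
  have "SQ D (\<lambda>s. Gy x y - gy x y s)" using var_y m unfolding SQ_def by auto
  from SQ_diff[OF SQ_const[OF DP.finite_measure_axioms, of "Gy x y"] this] show ?thesis by simp
qed

lemma SQ_D_gx: "SQ D (gx x y)"
proof -
  have m: "gx x y \<in> borel_measurable D" using A3_unbiased by (auto intro: borel_measurable_integrable)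
  have "SQ D (\<lambda>s. Gx x y - gx x y s)" using var_x m unfolding SQ_def by auto
  from SQ_diff[OF SQ_const[OF DP.finite_measure_axioms, of "Gx x y"] this] show ?thesis by simp
qed

lemma SQ_xi:
  fixes f :: "'s \<Rightarrow> 'b::euclidean_space"
  assumes f: "SQ D f" and i: "1 \<le> i"
  shows "SQ M (\<lambda>\<omega>. f (\<xi> i \<omega>))"
proof -
  have [measurable]: "f \<in> borel_measurable D" "\<xi> i \<in> measurable M D" using f xi_meas[OF i] by (auto simp: SQ_def)
  have "integrable (distr M D (\<xi> i)) (\<lambda>s. (norm (f s))\<^sup>2)" using f iid_distr i by (simp add: SQ_def)
  then have "integrable M (\<lambda>\<omega>. (norm (f (\<xi> i \<omega>)))\<^sup>2)"
    by (subst (asm) integrable_distr_eq) auto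
  moreover have "(\<lambda>\<omega>. f (\<xi> i \<omega>)) \<in> borel_measurable M" by measurable
  ultimately show ?thesis unfolding SQ_def by blast
qed

lemma SQ_gy:
  assumes a: "SQ M a" and b: "SQ M b" and i: "1 \<le> i"
  shows "SQ M (\<lambda>\<omega>. gy (a \<omega>) (b \<omega>) (\<xi> i \<omega>))"
proof -
  have am: "a \<in> borel_measurable M" and bm: "b \<in> borel_measurable M" using a b by (auto simp: SQ_def)
  have r: "SQ M (\<lambda>\<omega>. norm (gy x1 y1 (\<xi> i \<omega>)) + Lf *\<^sub>R (norm (a \<omega> - x1) + norm (b \<omega> - y1)))"
    by (intro SQ_add SQ_scaleR SQ_norm SQ_diff SQ_xi[OF SQ_D_gy i] a b SQ_const P.finite_measure_axioms)
  show ?thesis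
  proof (rule SQ_bound[OF r])
    show "(\<lambda>\<omega>. gy (a \<omega>) (b \<omega>) (\<xi> i \<omega>)) \<in> borel_measurable M"
      by (rule g_comp_meas[OF gy_meas am bm xi_meas[OF i]])
    fix \<omega> assume "\<omega> \<in> space M"
    then have s: "\<xi> i \<omega> \<in> space D" using xi_meas[OF i] by (auto simp: measurable_def)
    have "norm (gy (a \<omega>) (b \<omega>) (\<xi> i \<omega>)) \<le> norm (gy x1 y1 (\<xi> i \<omega>)) + norm (gy (a \<omega>) (b \<omega>) (\<xi> i \<omega>) - gy x1 y1 (\<xi> i \<omega>))"
      by (rule norm_triangle_sub)
    also have "\<dots> \<le> norm (gy x1 y1 (\<xi> i \<omega>)) + Lf *\<^sub>R (norm (a \<omega> - x1) + norm (b \<omega> - y1))"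
      using gy_Lip[OF s] by simp
    also have "\<dots> \<le> norm (norm (gy x1 y1 (\<xi> i \<omega>)) + Lf *\<^sub>R (norm (a \<omega> - x1) + norm (b \<omega> - y1)))"
      by simp
    finally show "norm (gy (a \<omega>) (b \<omega>) (\<xi> i \<omega>)) \<le> norm (norm (gy x1 y1 (\<xi> i \<omega>)) + Lf *\<^sub>R (norm (a \<omega> - x1) + norm (b \<omega> - y1)))" .
  qed
qed

lemma SQ_gx:
  assumes a: "SQ M a" and b: "SQ M b" and i: "1 \<le> i"
  shows "SQ M (\<lambda>\<omega>. gx (a \<omega>) (b \<omega>) (\<xi> i \<omega>))"
proof -
  have am: "a \<in> borel_measurable M" and bm: "b \<in> borel_measurable M" using a b by (auto simp: SQ_def)
  have r: "SQ M (\<lambda>\<omega>. norm (gx x1 y1 (\<xi> i \<omega>)) + Lf *\<^sub>R (norm (a \<omega> - x1) + norm (b \<omega> - y1)))"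
    by (intro SQ_add SQ_scaleR SQ_norm SQ_diff SQ_xi[OF SQ_D_gx i] a b SQ_const P.finite_measure_axioms)
  show ?thesis
  proof (rule SQ_bound[OF r])
    show "(\<lambda>\<omega>. gx (a \<omega>) (b \<omega>) (\<xi> i \<omega>)) \<in> borel_measurable M"
      by (rule g_comp_meas[OF gx_meas am bm xi_meas[OF i]])
    fix \<omega> assume "\<omega> \<in> space M"
    then have s: "\<xi> i \<omega> \<in> space D" using xi_meas[OF i] by (auto simp: measurable_def)
    have "norm (gx (a \<omega>) (b \<omega>) (\<xi> i \<omega>)) \<le> norm (gx x1 y1 (\<xi> i \<omega>)) + norm (gx (a \<omega>) (b \<omega>) (\<xi> i \<omega>) - gx x1 y1 (\<xi> i \<omega>))"
      by (rule norm_triangle_sub)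
    also have "\<dots> \<le> norm (gx x1 y1 (\<xi> i \<omega>)) + Lf *\<^sub>R (norm (a \<omega> - x1) + norm (b \<omega> - y1))"
      using gx_Lip[OF s] by simp
    also have "\<dots> \<le> norm (norm (gx x1 y1 (\<xi> i \<omega>)) + Lf *\<^sub>R (norm (a \<omega> - x1) + norm (b \<omega> - y1)))"
      by simp
    finally show "norm (gx (a \<omega>) (b \<omega>) (\<xi> i \<omega>)) \<le> norm (norm (gx x1 y1 (\<xi> i \<omega>)) + Lf *\<^sub>R (norm (a \<omega> - x1) + norm (b \<omega> - y1)))" .
  qed
qed

lemma SQ_Gy:
  assumes a: "SQ M a" and b: "SQ M b"
  shows "SQ M (\<lambda>\<omega>. Gy (a \<omega>) (b \<omega>))"
proof -
  have am: "a \<in> borel_measurable M" and bm: "b \<in> borel_measurable M" using a b by (auto simp: SQ_def)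
  have r: "SQ M (\<lambda>\<omega>. norm (Gy x1 y1) + Lf *\<^sub>R (norm (a \<omega> - x1) + norm (b \<omega> - y1)))"
    by (intro SQ_add SQ_scaleR SQ_norm SQ_diff a b SQ_const P.finite_measure_axioms)
  show ?thesis
  proof (rule SQ_bound[OF r])
    show "(\<lambda>\<omega>. Gy (a \<omega>) (b \<omega>)) \<in> borel_measurable M" by (rule Gy_meas[OF am bm])
    fix \<omega>
    have "norm (Gy (a \<omega>) (b \<omega>)) \<le> norm (Gy x1 y1) + norm (Gy (a \<omega>) (b \<omega>) - Gy x1 y1)"
      by (rule norm_triangle_sub)
    also have "\<dots> \<le> norm (Gy x1 y1) + Lf *\<^sub>R (norm (a \<omega> - x1) + norm (b \<omega> - y1))"
      using Gy_Lip by simp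
    also have "\<dots> \<le> norm (norm (Gy x1 y1) + Lf *\<^sub>R (norm (a \<omega> - x1) + norm (b \<omega> - y1)))"
      by simp
    finally show "norm (Gy (a \<omega>) (b \<omega>)) \<le> norm (norm (Gy x1 y1) + Lf *\<^sub>R (norm (a \<omega> - x1) + norm (b \<omega> - y1)))" .
  qed
qed

lemma SQ_Gx:
  assumes a: "SQ M a" and b: "SQ M b"
  shows "SQ M (\<lambda>\<omega>. Gx (a \<omega>) (b \<omega>))"
proof -
  have am: "a \<in> borel_measurable M" and bm: "b \<in> borel_measurable M" using a b by (auto simp: SQ_def)
  have r: "SQ M (\<lambda>\<omega>. norm (Gx x1 y1) + Lf *\<^sub>R (norm (a \<omega> - x1) + norm (b \<omega> - y1)))"
    by (intro SQ_add SQ_scaleR SQ_norm SQ_diff a b SQ_const P.finite_measure_axioms)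
  show ?thesis
  proof (rule SQ_bound[OF r])
    show "(\<lambda>\<omega>. Gx (a \<omega>) (b \<omega>)) \<in> borel_measurable M" by (rule Gx_meas[OF am bm])
    fix \<omega>
    have "norm (Gx (a \<omega>) (b \<omega>)) \<le> norm (Gx x1 y1) + norm (Gx (a \<omega>) (b \<omega>) - Gx x1 y1)"
      by (rule norm_triangle_sub)
    also have "\<dots> \<le> norm (Gx x1 y1) + Lf *\<^sub>R (norm (a \<omega> - x1) + norm (b \<omega> - y1))"
      using Gx_Lip by simp
    also have "\<dots> \<le> norm (norm (Gx x1 y1) + Lf *\<^sub>R (norm (a \<omega> - x1) + norm (b \<omega> - y1)))"
      by simp
    finally show "norm (Gx (a \<omega>) (b \<omega>)) \<le> norm (norm (Gx x1 y1) + Lf *\<^sub>R (norm (a \<omega> - x1) + norm (b \<omega> - y1)))" .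
  qed
qed

definition S where "S n \<omega> = msgda gx gy \<gamma> lam \<eta> \<alpha> \<beta> x1 y1 (\<lambda>i. \<xi> i \<omega>) n"

lemma S_SS: "S (Suc (Suc m)) \<omega> = nxt gx gy \<gamma> lam \<eta> \<alpha> \<beta> (Suc m) (S (Suc m) \<omega>) (\<xi> (Suc (Suc m)) \<omega>)"
  unfolding S_def by (rule msgda_SS)

lemma S_SQ: "1 \<le> n \<Longrightarrow> SQ M (S n)"
proof (induction n rule: nat_less_induct)
  case (1 n)
  show ?case
  proof (cases n)
    case 0
    then show ?thesis using 1 by simp
  next
    case (Suc m)
    show ?thesis
    proof (cases m)
      case 0
      have c: "SQ M (\<lambda>_. x1)" "SQ M (\<lambda>_. y1)" by (auto intro: SQ_const P.finite_measure_axioms)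
      have "SQ M (\<lambda>\<omega>. (x1, y1, gy x1 y1 (\<xi> 1 \<omega>), gx x1 y1 (\<xi> 1 \<omega>)))"
        by (intro SQ_Pair c SQ_gy SQ_gx) auto
      moreover have "S n = (\<lambda>\<omega>. (x1, y1, gy x1 y1 (\<xi> 1 \<omega>), gx x1 y1 (\<xi> 1 \<omega>)))"
        using Suc 0 by (auto simp: S_def)
      ultimately show ?thesis by simp
    next
      case (Suc k)
      have ih: "SQ M (S m)" using 1 \<open>n = Suc m\<close> Suc by auto
      note X = SQ_fst[OF ih] and Y = SQ_fst[OF SQ_snd[OF ih]] and V = SQ_fst[OF SQ_snd[OF SQ_snd[OF ih]]]
        and W = SQ_snd[OF SQ_snd[OF SQ_snd[OF ih]]]
      have X': "SQ M (\<lambda>\<omega>. fst (S m \<omega>) - (\<eta> m * \<gamma>) *\<^sub>R snd (snd (snd (S m \<omega>))))"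
        by (intro SQ_diff SQ_scaleR X W)
      have Y': "SQ M (\<lambda>\<omega>. fst (snd (S m \<omega>)) + (\<eta> m * lam) *\<^sub>R fst (snd (snd (S m \<omega>))))"
        by (intro SQ_add SQ_scaleR Y V)
      have "SQ M (\<lambda>\<omega>. nxt gx gy \<gamma> lam \<eta> \<alpha> \<beta> m (S m \<omega>) (\<xi> n \<omega>))"
        unfolding nxt_eq
        by (intro SQ_Pair X' Y' SQ_add SQ_scaleR SQ_diff SQ_gy SQ_gx X Y V W) (auto simp: \<open>n = Suc m\<close>)
      moreover have "S n = (\<lambda>\<omega>. nxt gx gy \<gamma> lam \<eta> \<alpha> \<beta> m (S m \<omega>) (\<xi> n \<omega>))"
        using \<open>n = Suc m\<close> Suc by (auto simp: S_SS)
      ultimately show ?thesis by simp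
    qed
  qed
qed

lemma S_meas: "1 \<le> n \<Longrightarrow> S n \<in> borel_measurable M"
  using S_SQ by (simp add: SQ_def)

lemma indep_S:
  assumes t: "1 \<le> t"
  shows "distr M borel (S t) \<Otimes>\<^sub>M D = distr M (borel \<Otimes>\<^sub>M D) (\<lambda>\<omega>. (S t \<omega>, \<xi> (Suc t) \<omega>))"
proof -
  have ind: "P.indep_var (PiM {1..t} (\<lambda>_. D)) (\<lambda>\<omega>. restrict (\<lambda>i. \<xi> i \<omega>) {1..t})
      (PiM {Suc t} (\<lambda>_. D)) (\<lambda>\<omega>. restrict (\<lambda>i. \<xi> i \<omega>) {Suc t})"
    by (rule P.indep_var_restrict[OF iid_indep]) auto
  have Y1: "(\<lambda>f. msgda gx gy \<gamma> lam \<eta> \<alpha> \<beta> x1 y1 f t) \<in> borel_measurable (PiM {1..t} (\<lambda>_. D))"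
    using msgda_meas[OF gx_meas gy_meas, where s="\<lambda>b. b" and N="PiM {1..t} (\<lambda>_. D)" and n=t] t
    by (auto intro: measurable_component_singleton)
  have Y2: "(\<lambda>f. f (Suc t)) \<in> measurable (PiM {Suc t} (\<lambda>_. D)) D"
    by (rule measurable_component_singleton) auto
  define R1 where "R1 = (\<lambda>\<omega>. restrict (\<lambda>i. \<xi> i \<omega>) {1..t})"
  define R2 where "R2 = (\<lambda>\<omega>. restrict (\<lambda>i. \<xi> i \<omega>) {Suc t})"
  define Y1 where "Y1 = (\<lambda>f. msgda gx gy \<gamma> lam \<eta> \<alpha> \<beta> x1 y1 f t)"
  define Y2 where "Y2 = (\<lambda>f::nat \<Rightarrow> 's. f (Suc t))"
  have R1m: "R1 \<in> measurable M (PiM {1..t} (\<lambda>_. D))"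
    unfolding R1_def by (intro measurable_restrict xi_meas) auto
  have R2m: "R2 \<in> measurable M (PiM {Suc t} (\<lambda>_. D))"
    unfolding R2_def by (intro measurable_restrict xi_meas) auto
  note Y1m = Y1[folded Y1_def] and Y2m = Y2[folded Y2_def]
  have dist: "distr M (PiM {1..t} (\<lambda>_. D)) R1 \<Otimes>\<^sub>M distr M (PiM {Suc t} (\<lambda>_. D)) R2
      = distr M (PiM {1..t} (\<lambda>_. D) \<Otimes>\<^sub>M PiM {Suc t} (\<lambda>_. D)) (\<lambda>\<omega>. (R1 \<omega>, R2 \<omega>))"
    using ind unfolding R1_def R2_def by (simp add: P.indep_var_distribution_eq)
  have SY: "S t = Y1 \<circ> R1"
    unfolding S_def o_def Y1_def R1_def by (intro ext msgda_cong[symmetric] t) auto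
  have ZY: "\<xi> (Suc t) = Y2 \<circ> R2"
    by (auto simp: o_def Y2_def R2_def)
  have sf: "sigma_finite_measure (distr (distr M (PiM {Suc t} (\<lambda>_. D)) R2) D Y2)"
  proof -
    have "distr (distr M (PiM {Suc t} (\<lambda>_. D)) R2) D Y2 = D"
      using iid_distr by (simp add: distr_distr[OF Y2m R2m] ZY[symmetric])
    then show ?thesis using DP.sigma_finite_measure_axioms by simp
  qed
  have "distr M borel (S t) \<Otimes>\<^sub>M D = distr M borel (S t) \<Otimes>\<^sub>M distr M D (\<xi> (Suc t))"
    using iid_distr by simp
  also have "\<dots> = distr (distr M (PiM {1..t} (\<lambda>_. D)) R1) borel Y1 \<Otimes>\<^sub>M distr (distr M (PiM {Suc t} (\<lambda>_. D)) R2) D Y2"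
    unfolding SY ZY by (simp only: distr_distr[OF Y1m R1m] distr_distr[OF Y2m R2m])
  also have "\<dots> = distr (distr M (PiM {1..t} (\<lambda>_. D)) R1 \<Otimes>\<^sub>M distr M (PiM {Suc t} (\<lambda>_. D)) R2) (borel \<Otimes>\<^sub>M D)
       (\<lambda>(x, y). (Y1 x, Y2 y))"
    by (rule pair_measure_distr) (use Y1m Y2m sf in auto)
  also have "\<dots> = distr M (borel \<Otimes>\<^sub>M D) ((\<lambda>(x, y). (Y1 x, Y2 y)) \<circ> (\<lambda>\<omega>. (R1 \<omega>, R2 \<omega>)))"
    unfolding dist by (rule distr_distr) (use Y1m Y2m R1m R2m in \<open>auto intro!: measurable_Pair\<close>)
  also have "\<dots> = distr M (borel \<Otimes>\<^sub>M D) (\<lambda>\<omega>. (S t \<omega>, \<xi> (Suc t) \<omega>))"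
    by (simp add: SY ZY o_def)
  finally show ?thesis .
qed

lemma K_bound:
  fixes a p q :: real
  assumes "0 \<le> a" "a \<le> 1" "p = \<bar>e\<bar> * P" "q = \<bar>e\<bar> * Q"
  shows "2 * (1 - a)\<^sup>2 * (L * (p + q))\<^sup>2 \<le> 4 * L\<^sup>2 * e\<^sup>2 * (P\<^sup>2 + Q\<^sup>2)"
proof -
  have "(1 - a)\<^sup>2 \<le> 1" using assms by (simp add: power_le_one abs_le_iff)
  have "(L * (p + q))\<^sup>2 = L\<^sup>2 * (p + q)\<^sup>2" by (simp add: power_mult_distrib)
  also have "\<dots> \<le> L\<^sup>2 * (2 * (p\<^sup>2 + q\<^sup>2))"
    by (intro mult_left_mono) (auto simp: power2_sum, smt (verit) sum_squares_bound)
  finally have 1: "(L * (p + q))\<^sup>2 \<le> 2 * L\<^sup>2 * e\<^sup>2 * (P\<^sup>2 + Q\<^sup>2)"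
    using assms by (simp add: power_mult_distrib algebra_simps)
  have "2 * (1 - a)\<^sup>2 * (L * (p + q))\<^sup>2 \<le> 2 * 1 * (L * (p + q))\<^sup>2"
    using \<open>(1 - a)\<^sup>2 \<le> 1\<close> by (intro mult_right_mono mult_left_mono) auto
  then show ?thesis using 1 by linarith
qed

lemma main_v_S:
  assumes t: "1 \<le> t"
  defines "X' \<equiv> \<lambda>z. fst z - (\<eta> t * \<gamma>) *\<^sub>R snd (snd (snd z))"
    and "Y' \<equiv> \<lambda>z. fst (snd z) + (\<eta> t * lam) *\<^sub>R fst (snd (snd z))"
  defines "H \<equiv> \<lambda>p. (norm (gy (X' (fst p)) (Y' (fst p)) (snd p)
        + (1 - \<alpha> (Suc t)) *\<^sub>R (fst (snd (snd (fst p))) - gy (fst (fst p)) (fst (snd (fst p))) (snd p))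
        - Gy (X' (fst p)) (Y' (fst p))))\<^sup>2"
    and "R \<equiv> \<lambda>z. (1 - \<alpha> (Suc t)) * (norm (fst (snd (snd z)) - Gy (fst z) (fst (snd z))))\<^sup>2
        + 2 * (\<alpha> (Suc t))\<^sup>2 * \<sigma>\<^sup>2
        + 4 * Lf\<^sup>2 * (\<eta> t)\<^sup>2 * ((norm (\<gamma> *\<^sub>R snd (snd (snd z))))\<^sup>2 + (norm (lam *\<^sub>R fst (snd (snd z))))\<^sup>2)"
  shows "(\<integral>\<omega>. H (S t \<omega>, \<xi> (Suc t) \<omega>) \<partial>M) \<le> (\<integral>\<omega>. R (S t \<omega>) \<partial>M)"
proof -
  have a: "0 \<le> \<alpha> (Suc t)" "\<alpha> (Suc t) \<le> 1" using steps(1) by (auto intro: less_imp_le)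
  have R_nn: "0 \<le> R z" for z unfolding R_def using a by (intro add_nonneg_nonneg mult_nonneg_nonneg) auto
  have pw: "(\<integral>\<^sup>+ s. ennreal (H (z, s)) \<partial>D) \<le> ennreal (R z)" for z
  proof -
    let ?K = "Lf * (norm (X' z - fst z) + norm (Y' z - fst (snd z)))"
    have K: "\<forall>s\<in>space D. norm (gy (X' z) (Y' z) s - gy (fst z) (fst (snd z)) s) \<le> ?K"
      using gy_Lip by blast
    have c: "integrable D (\<lambda>s. (norm (gy (X' z) (Y' z) s + (1 - \<alpha> (Suc t)) *\<^sub>R (fst (snd (snd z)) - gy (fst z) (fst (snd z)) s) - Gy (X' z) (Y' z)))\<^sup>2) \<and>
      (\<integral>s. (norm (gy (X' z) (Y' z) s + (1 - \<alpha> (Suc t)) *\<^sub>R (fst (snd (snd z)) - gy (fst z) (fst (snd z)) s) - Gy (X' z) (Y' z)))\<^sup>2 \<partial>D)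
      \<le> (1 - \<alpha> (Suc t)) * (norm (fst (snd (snd z)) - Gy (fst z) (fst (snd z))))\<^sup>2 + 2 * (\<alpha> (Suc t))\<^sup>2 * \<sigma>\<^sup>2 + 2 * (1 - \<alpha> (Suc t))\<^sup>2 * ?K\<^sup>2"
      by (rule core[OF D_prob _ _ _ _ _ _ K a]) (use A3_unbiased var_y in auto)
    have Kb: "2 * (1 - \<alpha> (Suc t))\<^sup>2 * ?K\<^sup>2 \<le> 4 * Lf\<^sup>2 * (\<eta> t)\<^sup>2 * ((norm (\<gamma> *\<^sub>R snd (snd (snd z))))\<^sup>2 + (norm (lam *\<^sub>R fst (snd (snd z))))\<^sup>2)"
      by (rule K_bound[OF a]) (simp_all add: X'_def Y'_def abs_mult)
    have "(\<integral>\<^sup>+ s. ennreal (H (z, s)) \<partial>D) = ennreal (\<integral>s. H (z, s) \<partial>D)"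
      by (rule nn_integral_eq_integral) (use c in \<open>auto simp: H_def\<close>)
    also have "\<dots> \<le> ennreal (R z)"
      using c Kb by (intro ennreal_leI) (simp add: H_def R_def)
    finally show ?thesis .
  qed
  have Sm: "S t \<in> borel_measurable M" by (rule S_meas[OF t])
  have fm: "(\<lambda>p. fst p) \<in> measurable ((borel :: ((real^'d) \<times> (real^'p) \<times> (real^'p) \<times> (real^'d)) measure) \<Otimes>\<^sub>M D) (borel \<Otimes>\<^sub>M (borel \<Otimes>\<^sub>M (borel \<Otimes>\<^sub>M borel)))"
    using measurable_fst[of "borel :: ((real^'d) \<times> (real^'p) \<times> (real^'p) \<times> (real^'d)) measure" D]
    by (simp add: borel_prod)
  have sm: "snd \<in> measurable (borel \<Otimes>\<^sub>M D) D" by simp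
  note [measurable] = fm
  have X'm: "(\<lambda>p. X' (fst p)) \<in> borel_measurable (borel \<Otimes>\<^sub>M D)" unfolding X'_def by measurable
  have Y'm: "(\<lambda>p. Y' (fst p)) \<in> borel_measurable (borel \<Otimes>\<^sub>M D)" unfolding Y'_def by measurable
  have Xm: "(\<lambda>p. fst (fst p)) \<in> borel_measurable ((borel :: ((real^'d) \<times> (real^'p) \<times> (real^'p) \<times> (real^'d)) measure) \<Otimes>\<^sub>M D)" "(\<lambda>p. fst (snd (fst p))) \<in> borel_measurable ((borel :: ((real^'d) \<times> (real^'p) \<times> (real^'p) \<times> (real^'d)) measure) \<Otimes>\<^sub>M D)"
    by measurable
  note [measurable] = g_comp_meas[OF gy_meas X'm Y'm sm] g_comp_meas[OF gy_meas Xm sm] Gy_meas[OF X'm Y'm]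
  have Hm: "H \<in> borel_measurable (borel \<Otimes>\<^sub>M D)" unfolding H_def by measurable
  have z4: "(\<lambda>z. z) \<in> measurable (borel :: ((real^'d) \<times> (real^'p) \<times> (real^'p) \<times> (real^'d)) measure) (borel \<Otimes>\<^sub>M (borel \<Otimes>\<^sub>M (borel \<Otimes>\<^sub>M borel)))"
    by (simp add: borel_prod)
  note [measurable] = z4
  have zXm: "(\<lambda>z. fst z) \<in> borel_measurable (borel :: ((real^'d) \<times> (real^'p) \<times> (real^'p) \<times> (real^'d)) measure)"
     "(\<lambda>z. fst (snd z)) \<in> borel_measurable (borel :: ((real^'d) \<times> (real^'p) \<times> (real^'p) \<times> (real^'d)) measure)" by measurable
  note [measurable] = Gy_meas[OF zXm]
  have Rm: "R \<in> borel_measurable borel" unfolding R_def by measurable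
  have SQS: "SQ M (S t)" by (rule S_SQ[OF t])
  note X = SQ_fst[OF SQS] and Y = SQ_fst[OF SQ_snd[OF SQS]] and V = SQ_fst[OF SQ_snd[OF SQ_snd[OF SQS]]]
        and W = SQ_snd[OF SQ_snd[OF SQ_snd[OF SQS]]]
  have i1: "SQ M (\<lambda>\<omega>. fst (snd (snd (S t \<omega>))) - Gy (fst (S t \<omega>)) (fst (snd (S t \<omega>))))"
    by (intro SQ_diff SQ_Gy X Y V)
  have i2: "SQ M (\<lambda>\<omega>. \<gamma> *\<^sub>R snd (snd (snd (S t \<omega>))))" "SQ M (\<lambda>\<omega>. lam *\<^sub>R fst (snd (snd (S t \<omega>))))"
    by (intro SQ_scaleR V W)+
  have iR: "integrable M (\<lambda>\<omega>. R (S t \<omega>))"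
    using i1 i2 unfolding R_def SQ_def by auto
  have "(\<integral>\<^sup>+ \<omega>. ennreal (H (S t \<omega>, \<xi> (Suc t) \<omega>)) \<partial>M)
      = (\<integral>\<^sup>+ p. ennreal (H p) \<partial>distr M (borel \<Otimes>\<^sub>M D) (\<lambda>\<omega>. (S t \<omega>, \<xi> (Suc t) \<omega>)))"
    by (rule nn_integral_distr[symmetric]) (use Sm xi_meas Hm in auto)
  also have "\<dots> = (\<integral>\<^sup>+ p. ennreal (H p) \<partial>(distr M borel (S t) \<Otimes>\<^sub>M D))"
    by (simp add: indep_S[OF t])
  also have "\<dots> = (\<integral>\<^sup>+ z. \<integral>\<^sup>+ s. ennreal (H (z, s)) \<partial>D \<partial>distr M borel (S t))"
    by (rule DP.nn_integral_fst[symmetric]) (use Hm in auto)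
  also have "\<dots> \<le> (\<integral>\<^sup>+ z. ennreal (R z) \<partial>distr M borel (S t))"
    by (rule nn_integral_mono) (rule pw)
  also have "\<dots> = (\<integral>\<^sup>+ \<omega>. ennreal (R (S t \<omega>)) \<partial>M)"
    by (rule nn_integral_distr) (use Sm Rm in auto)
  also have "\<dots> = ennreal (\<integral>\<omega>. R (S t \<omega>) \<partial>M)"
    by (rule nn_integral_eq_integral) (use iR R_nn in auto)
  finally have le: "(\<integral>\<^sup>+ \<omega>. ennreal (H (S t \<omega>, \<xi> (Suc t) \<omega>)) \<partial>M) \<le> ennreal (\<integral>\<omega>. R (S t \<omega>) \<partial>M)" .
  show ?thesis
    by (rule integral_real_bounded[OF _ le]) (use R_nn in \<open>auto intro: integral_nonneg\<close>)
qed

lemma main_w_S: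
  assumes t: "1 \<le> t"
  defines "X' \<equiv> \<lambda>z. fst z - (\<eta> t * \<gamma>) *\<^sub>R snd (snd (snd z))"
    and "Y' \<equiv> \<lambda>z. fst (snd z) + (\<eta> t * lam) *\<^sub>R fst (snd (snd z))"
  defines "H \<equiv> \<lambda>p. (norm (gx (X' (fst p)) (Y' (fst p)) (snd p)
        + (1 - \<beta> (Suc t)) *\<^sub>R (snd (snd (snd (fst p))) - gx (fst (fst p)) (fst (snd (fst p))) (snd p))
        - Gx (X' (fst p)) (Y' (fst p))))\<^sup>2"
    and "R \<equiv> \<lambda>z. (1 - \<beta> (Suc t)) * (norm (snd (snd (snd z)) - Gx (fst z) (fst (snd z))))\<^sup>2
        + 2 * (\<beta> (Suc t))\<^sup>2 * \<sigma>\<^sup>2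
        + 4 * Lf\<^sup>2 * (\<eta> t)\<^sup>2 * ((norm (\<gamma> *\<^sub>R snd (snd (snd z))))\<^sup>2 + (norm (lam *\<^sub>R fst (snd (snd z))))\<^sup>2)"
  shows "(\<integral>\<omega>. H (S t \<omega>, \<xi> (Suc t) \<omega>) \<partial>M) \<le> (\<integral>\<omega>. R (S t \<omega>) \<partial>M)"
proof -
  have a: "0 \<le> \<beta> (Suc t)" "\<beta> (Suc t) \<le> 1" using steps(2) by (auto intro: less_imp_le)
  have R_nn: "0 \<le> R z" for z unfolding R_def using a by (intro add_nonneg_nonneg mult_nonneg_nonneg) auto
  have pw: "(\<integral>\<^sup>+ s. ennreal (H (z, s)) \<partial>D) \<le> ennreal (R z)" for z
  proof -
    let ?K = "Lf * (norm (X' z - fst z) + norm (Y' z - fst (snd z)))"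
    have K: "\<forall>s\<in>space D. norm (gx (X' z) (Y' z) s - gx (fst z) (fst (snd z)) s) \<le> ?K"
      using gx_Lip by blast
    have c: "integrable D (\<lambda>s. (norm (gx (X' z) (Y' z) s + (1 - \<beta> (Suc t)) *\<^sub>R (snd (snd (snd z)) - gx (fst z) (fst (snd z)) s) - Gx (X' z) (Y' z)))\<^sup>2) \<and>
      (\<integral>s. (norm (gx (X' z) (Y' z) s + (1 - \<beta> (Suc t)) *\<^sub>R (snd (snd (snd z)) - gx (fst z) (fst (snd z)) s) - Gx (X' z) (Y' z)))\<^sup>2 \<partial>D)
      \<le> (1 - \<beta> (Suc t)) * (norm (snd (snd (snd z)) - Gx (fst z) (fst (snd z))))\<^sup>2 + 2 * (\<beta> (Suc t))\<^sup>2 * \<sigma>\<^sup>2 + 2 * (1 - \<beta> (Suc t))\<^sup>2 * ?K\<^sup>2"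
      by (rule core[OF D_prob _ _ _ _ _ _ K a]) (use A3_unbiased var_x in auto)
    have Kb: "2 * (1 - \<beta> (Suc t))\<^sup>2 * ?K\<^sup>2 \<le> 4 * Lf\<^sup>2 * (\<eta> t)\<^sup>2 * ((norm (\<gamma> *\<^sub>R snd (snd (snd z))))\<^sup>2 + (norm (lam *\<^sub>R fst (snd (snd z))))\<^sup>2)"
      by (rule K_bound[OF a]) (simp_all add: X'_def Y'_def abs_mult)
    have "(\<integral>\<^sup>+ s. ennreal (H (z, s)) \<partial>D) = ennreal (\<integral>s. H (z, s) \<partial>D)"
      by (rule nn_integral_eq_integral) (use c in \<open>auto simp: H_def\<close>)
    also have "\<dots> \<le> ennreal (R z)"
      using c Kb by (intro ennreal_leI) (simp add: H_def R_def)
    finally show ?thesis .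
  qed
  have Sm: "S t \<in> borel_measurable M" by (rule S_meas[OF t])
  have fm: "(\<lambda>p. fst p) \<in> measurable ((borel :: ((real^'d) \<times> (real^'p) \<times> (real^'p) \<times> (real^'d)) measure) \<Otimes>\<^sub>M D) (borel \<Otimes>\<^sub>M (borel \<Otimes>\<^sub>M (borel \<Otimes>\<^sub>M borel)))"
    using measurable_fst[of "borel :: ((real^'d) \<times> (real^'p) \<times> (real^'p) \<times> (real^'d)) measure" D]
    by (simp add: borel_prod)
  have sm: "snd \<in> measurable (borel \<Otimes>\<^sub>M D) D" by simp
  note [measurable] = fm
  have X'm: "(\<lambda>p. X' (fst p)) \<in> borel_measurable (borel \<Otimes>\<^sub>M D)" unfolding X'_def by measurable
  have Y'm: "(\<lambda>p. Y' (fst p)) \<in> borel_measurable (borel \<Otimes>\<^sub>M D)" unfolding Y'_def by measurable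
  have Xm: "(\<lambda>p. fst (fst p)) \<in> borel_measurable ((borel :: ((real^'d) \<times> (real^'p) \<times> (real^'p) \<times> (real^'d)) measure) \<Otimes>\<^sub>M D)" "(\<lambda>p. fst (snd (fst p))) \<in> borel_measurable ((borel :: ((real^'d) \<times> (real^'p) \<times> (real^'p) \<times> (real^'d)) measure) \<Otimes>\<^sub>M D)"
    by measurable
  note [measurable] = g_comp_meas[OF gx_meas X'm Y'm sm] g_comp_meas[OF gx_meas Xm sm] Gx_meas[OF X'm Y'm]
  have Hm: "H \<in> borel_measurable (borel \<Otimes>\<^sub>M D)" unfolding H_def by measurable
  have z4: "(\<lambda>z. z) \<in> measurable (borel :: ((real^'d) \<times> (real^'p) \<times> (real^'p) \<times> (real^'d)) measure) (borel \<Otimes>\<^sub>M (borel \<Otimes>\<^sub>M (borel \<Otimes>\<^sub>M borel)))"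
    by (simp add: borel_prod)
  note [measurable] = z4
  have zXm: "(\<lambda>z. fst z) \<in> borel_measurable (borel :: ((real^'d) \<times> (real^'p) \<times> (real^'p) \<times> (real^'d)) measure)"
     "(\<lambda>z. fst (snd z)) \<in> borel_measurable (borel :: ((real^'d) \<times> (real^'p) \<times> (real^'p) \<times> (real^'d)) measure)" by measurable
  note [measurable] = Gx_meas[OF zXm]
  have Rm: "R \<in> borel_measurable borel" unfolding R_def by measurable
  have SQS: "SQ M (S t)" by (rule S_SQ[OF t])
  note X = SQ_fst[OF SQS] and Y = SQ_fst[OF SQ_snd[OF SQS]] and V = SQ_fst[OF SQ_snd[OF SQ_snd[OF SQS]]]
        and W = SQ_snd[OF SQ_snd[OF SQ_snd[OF SQS]]]
  have i1: "SQ M (\<lambda>\<omega>. snd (snd (snd (S t \<omega>))) - Gx (fst (S t \<omega>)) (fst (snd (S t \<omega>))))"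
    by (intro SQ_diff SQ_Gx X Y W)
  have i2: "SQ M (\<lambda>\<omega>. \<gamma> *\<^sub>R snd (snd (snd (S t \<omega>))))" "SQ M (\<lambda>\<omega>. lam *\<^sub>R fst (snd (snd (S t \<omega>))))"
    by (intro SQ_scaleR V W)+
  have iR: "integrable M (\<lambda>\<omega>. R (S t \<omega>))"
    using i1 i2 unfolding R_def SQ_def by auto
  have "(\<integral>\<^sup>+ \<omega>. ennreal (H (S t \<omega>, \<xi> (Suc t) \<omega>)) \<partial>M)
      = (\<integral>\<^sup>+ p. ennreal (H p) \<partial>distr M (borel \<Otimes>\<^sub>M D) (\<lambda>\<omega>. (S t \<omega>, \<xi> (Suc t) \<omega>)))"
    by (rule nn_integral_distr[symmetric]) (use Sm xi_meas Hm in auto)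
  also have "\<dots> = (\<integral>\<^sup>+ p. ennreal (H p) \<partial>(distr M borel (S t) \<Otimes>\<^sub>M D))"
    by (simp add: indep_S[OF t])
  also have "\<dots> = (\<integral>\<^sup>+ z. \<integral>\<^sup>+ s. ennreal (H (z, s)) \<partial>D \<partial>distr M borel (S t))"
    by (rule DP.nn_integral_fst[symmetric]) (use Hm in auto)
  also have "\<dots> \<le> (\<integral>\<^sup>+ z. ennreal (R z) \<partial>distr M borel (S t))"
    by (rule nn_integral_mono) (rule pw)
  also have "\<dots> = (\<integral>\<^sup>+ \<omega>. ennreal (R (S t \<omega>)) \<partial>M)"
    by (rule nn_integral_distr) (use Sm Rm in auto)
  also have "\<dots> = ennreal (\<integral>\<omega>. R (S t \<omega>) \<partial>M)"
    by (rule nn_integral_eq_integral) (use iR R_nn in auto)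
  finally have le: "(\<integral>\<^sup>+ \<omega>. ennreal (H (S t \<omega>, \<xi> (Suc t) \<omega>)) \<partial>M) \<le> ennreal (\<integral>\<omega>. R (S t \<omega>) \<partial>M)" .
  show ?thesis
    by (rule integral_real_bounded[OF _ le]) (use R_nn in \<open>auto intro: integral_nonneg\<close>)
qed

lemma main_v:
  assumes t: "1 \<le> t"
  shows "(\<integral>\<omega>. (norm (msgda_v gx gy \<gamma> lam \<eta> \<alpha> \<beta> x1 y1 (\<lambda>i. \<xi> i \<omega>) (t + 1)
        - Gy (msgda_x gx gy \<gamma> lam \<eta> \<alpha> \<beta> x1 y1 (\<lambda>i. \<xi> i \<omega>) (t + 1))
             (msgda_y gx gy \<gamma> lam \<eta> \<alpha> \<beta> x1 y1 (\<lambda>i. \<xi> i \<omega>) (t + 1))))\<^sup>2 \<partial>M)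
    \<le> (1 - \<alpha> (t + 1)) *
        (\<integral>\<omega>. (norm (msgda_v gx gy \<gamma> lam \<eta> \<alpha> \<beta> x1 y1 (\<lambda>i. \<xi> i \<omega>) t
          - Gy (msgda_x gx gy \<gamma> lam \<eta> \<alpha> \<beta> x1 y1 (\<lambda>i. \<xi> i \<omega>) t)
               (msgda_y gx gy \<gamma> lam \<eta> \<alpha> \<beta> x1 y1 (\<lambda>i. \<xi> i \<omega>) t)))\<^sup>2 \<partial>M)
      + 2 * (\<alpha> (t + 1))\<^sup>2 * \<sigma>\<^sup>2
      + 4 * Lf\<^sup>2 * (\<eta> t)\<^sup>2 *
        (\<integral>\<omega>. (norm (msgda_xtil gx gy \<gamma> lam \<eta> \<alpha> \<beta> x1 y1 (\<lambda>i. \<xi> i \<omega>) (t + 1)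
                   - msgda_x gx gy \<gamma> lam \<eta> \<alpha> \<beta> x1 y1 (\<lambda>i. \<xi> i \<omega>) t))\<^sup>2
              + (norm (msgda_ytil gx gy \<gamma> lam \<eta> \<alpha> \<beta> x1 y1 (\<lambda>i. \<xi> i \<omega>) (t + 1)
                   - msgda_y gx gy \<gamma> lam \<eta> \<alpha> \<beta> x1 y1 (\<lambda>i. \<xi> i \<omega>) t))\<^sup>2 \<partial>M)"
proof -
  obtain m where tm: "t = Suc m" using t by (cases t) auto
  have fold: "msgda gx gy \<gamma> lam \<eta> \<alpha> \<beta> x1 y1 (\<lambda>i. \<xi> i \<omega>) n = S n \<omega>" for n \<omega> by (simp add: S_def)
  have SQS: "SQ M (S t)" by (rule S_SQ[OF t])
  note X = SQ_fst[OF SQS] and Y = SQ_fst[OF SQ_snd[OF SQS]] and V = SQ_fst[OF SQ_snd[OF SQ_snd[OF SQS]]]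
        and W = SQ_snd[OF SQ_snd[OF SQ_snd[OF SQS]]]
  have i1: "SQ M (\<lambda>\<omega>. fst (snd (snd (S t \<omega>))) - Gy (fst (S t \<omega>)) (fst (snd (S t \<omega>))))"
    by (intro SQ_diff SQ_Gy X Y V W)
  have i2: "SQ M (\<lambda>\<omega>. \<gamma> *\<^sub>R snd (snd (snd (S t \<omega>))))" "SQ M (\<lambda>\<omega>. lam *\<^sub>R fst (snd (snd (S t \<omega>))))"
    by (intro SQ_scaleR V W)+
  have iA: "integrable M (\<lambda>\<omega>. (norm (fst (snd (snd (S t \<omega>))) - Gy (fst (S t \<omega>)) (fst (snd (S t \<omega>)))))\<^sup>2)"
    using i1 by (simp add: SQ_def)
  have iC: "integrable M (\<lambda>\<omega>. (norm (\<gamma> *\<^sub>R snd (snd (snd (S t \<omega>)))))\<^sup>2 + (norm (lam *\<^sub>R fst (snd (snd (S t \<omega>)))))\<^sup>2)"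
    using i2 by (simp add: SQ_def)
  note B = main_v_S[OF t]
  have eS: "S (Suc t) \<omega> = nxt gx gy \<gamma> lam \<eta> \<alpha> \<beta> t (S t \<omega>) (\<xi> (Suc t) \<omega>)" for \<omega>
    using S_SS[of m \<omega>] tm by simp
  show ?thesis
    unfolding Suc_eq_plus1[symmetric] msgda_xtil.simps msgda_ytil.simps
    unfolding msgda_v_def msgda_w_def msgda_x_def msgda_y_def fold
    using B iA iC by (simp add: eS nxt_eq P.prob_space)
qed

lemma main_w:
  assumes t: "1 \<le> t"
  shows "(\<integral>\<omega>. (norm (msgda_w gx gy \<gamma> lam \<eta> \<alpha> \<beta> x1 y1 (\<lambda>i. \<xi> i \<omega>) (t + 1)
        - Gx (msgda_x gx gy \<gamma> lam \<eta> \<alpha> \<beta> x1 y1 (\<lambda>i. \<xi> i \<omega>) (t + 1))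
             (msgda_y gx gy \<gamma> lam \<eta> \<alpha> \<beta> x1 y1 (\<lambda>i. \<xi> i \<omega>) (t + 1))))\<^sup>2 \<partial>M)
    \<le> (1 - \<beta> (t + 1)) *
        (\<integral>\<omega>. (norm (msgda_w gx gy \<gamma> lam \<eta> \<alpha> \<beta> x1 y1 (\<lambda>i. \<xi> i \<omega>) t
          - Gx (msgda_x gx gy \<gamma> lam \<eta> \<alpha> \<beta> x1 y1 (\<lambda>i. \<xi> i \<omega>) t)
               (msgda_y gx gy \<gamma> lam \<eta> \<alpha> \<beta> x1 y1 (\<lambda>i. \<xi> i \<omega>) t)))\<^sup>2 \<partial>M)
      + 2 * (\<beta> (t + 1))\<^sup>2 * \<sigma>\<^sup>2
      + 4 * Lf\<^sup>2 * (\<eta> t)\<^sup>2 *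
        (\<integral>\<omega>. (norm (msgda_xtil gx gy \<gamma> lam \<eta> \<alpha> \<beta> x1 y1 (\<lambda>i. \<xi> i \<omega>) (t + 1)
                   - msgda_x gx gy \<gamma> lam \<eta> \<alpha> \<beta> x1 y1 (\<lambda>i. \<xi> i \<omega>) t))\<^sup>2
              + (norm (msgda_ytil gx gy \<gamma> lam \<eta> \<alpha> \<beta> x1 y1 (\<lambda>i. \<xi> i \<omega>) (t + 1)
                   - msgda_y gx gy \<gamma> lam \<eta> \<alpha> \<beta> x1 y1 (\<lambda>i. \<xi> i \<omega>) t))\<^sup>2 \<partial>M)"
proof -
  obtain m where tm: "t = Suc m" using t by (cases t) auto
  have fold: "msgda gx gy \<gamma> lam \<eta> \<alpha> \<beta> x1 y1 (\<lambda>i. \<xi> i \<omega>) n = S n \<omega>" for n \<omega> by (simp add: S_def)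
  have SQS: "SQ M (S t)" by (rule S_SQ[OF t])
  note X = SQ_fst[OF SQS] and Y = SQ_fst[OF SQ_snd[OF SQS]] and V = SQ_fst[OF SQ_snd[OF SQ_snd[OF SQS]]]
        and W = SQ_snd[OF SQ_snd[OF SQ_snd[OF SQS]]]
  have i1: "SQ M (\<lambda>\<omega>. snd (snd (snd (S t \<omega>))) - Gx (fst (S t \<omega>)) (fst (snd (S t \<omega>))))"
    by (intro SQ_diff SQ_Gx X Y V W)
  have i2: "SQ M (\<lambda>\<omega>. \<gamma> *\<^sub>R snd (snd (snd (S t \<omega>))))" "SQ M (\<lambda>\<omega>. lam *\<^sub>R fst (snd (snd (S t \<omega>))))"
    by (intro SQ_scaleR V W)+
  have iA: "integrable M (\<lambda>\<omega>. (norm (snd (snd (snd (S t \<omega>))) - Gx (fst (S t \<omega>)) (fst (snd (S t \<omega>)))))\<^sup>2)"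
    using i1 by (simp add: SQ_def)
  have iC: "integrable M (\<lambda>\<omega>. (norm (\<gamma> *\<^sub>R snd (snd (snd (S t \<omega>)))))\<^sup>2 + (norm (lam *\<^sub>R fst (snd (snd (S t \<omega>)))))\<^sup>2)"
    using i2 by (simp add: SQ_def)
  note B = main_w_S[OF t]
  have eS: "S (Suc t) \<omega> = nxt gx gy \<gamma> lam \<eta> \<alpha> \<beta> t (S t \<omega>) (\<xi> (Suc t) \<omega>)" for \<omega>
    using S_SS[of m \<omega>] tm by simp
  show ?thesis
    unfolding Suc_eq_plus1[symmetric] msgda_xtil.simps msgda_ytil.simps
    unfolding msgda_v_def msgda_w_def msgda_x_def msgda_y_def fold
    using B iA iC by (simp add: eS nxt_eq P.prob_space)
qed

end

theorem lemma6:
  fixes M :: "'a measure" and D :: "'s measure"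
    and \<xi> :: "nat \<Rightarrow> 'a \<Rightarrow> 's"
    and F :: "real^'d \<Rightarrow> real^'p \<Rightarrow> 's \<Rightarrow> real"
    and gx :: "real^'d \<Rightarrow> real^'p \<Rightarrow> 's \<Rightarrow> real^'d"
    and gy :: "real^'d \<Rightarrow> real^'p \<Rightarrow> 's \<Rightarrow> real^'p"
    and Gx :: "real^'d \<Rightarrow> real^'p \<Rightarrow> real^'d"
    and Gy :: "real^'d \<Rightarrow> real^'p \<Rightarrow> real^'p"
    and \<gamma> lam Lf \<sigma> :: real and \<eta> \<alpha> \<beta> :: "nat \<Rightarrow> real"
    and x1 :: "real^'d" and y1 :: "real^'p" and t :: nat
  assumes M: "prob_space M"
    and iid_indep: "prob_space.indep_vars M (\<lambda>_. D) \<xi> {1..}"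
    and iid_distr: "\<forall>i\<ge>1. distr M D (\<xi> i) = D"
    and pos: "\<gamma> > 0" "lam > 0" "\<forall>k. \<eta> k > 0"
    and steps: "\<forall>k. 0 < \<alpha> k \<and> \<alpha> k \<le> 1" "\<forall>k. 0 < \<beta> k \<and> \<beta> k \<le> 1"
    \<comment> \<open>f(x,y;xi) is differentiable with partial gradients gx, gy\<close>
    and F_grad: "\<forall>s\<in>space D. \<forall>x y. ((\<lambda>z. F (fst z) (snd z) s) has_derivative
                   (\<lambda>h. gx x y s \<bullet> fst h + gy x y s \<bullet> snd h)) (at (x, y))"
    \<comment> \<open>f(x,y) = E_xi f(x,y;xi) is differentiable with partial gradients Gx, Gy\<close>
    and F_int: "\<forall>x y. integrable D (F x y)"
    and f_grad: "\<forall>x y. ((\<lambda>z. \<integral>s. F (fst z) (snd z) s \<partial>D) has_derivative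
                   (\<lambda>h. Gx x y \<bullet> fst h + Gy x y \<bullet> snd h)) (at (x, y))"
    \<comment> \<open>measurability of the stochastic gradients (standing convention)\<close>
    and gx_meas: "(\<lambda>(z, s). gx (fst z) (snd z) s) \<in> borel_measurable (borel \<Otimes>\<^sub>M D)"
    and gy_meas: "(\<lambda>(z, s). gy (fst z) (snd z) s) \<in> borel_measurable (borel \<Otimes>\<^sub>M D)"
    \<comment> \<open>(A2)\<close>
    and A2_gx: "\<forall>s\<in>space D. \<forall>x x' y y'.
        norm (gx x y s - gx x' y s) \<le> Lf * norm (x - x') \<and>
        norm (gx x y s - gx x y' s) \<le> Lf * norm (y - y')"
    and A2_gy: "\<forall>s\<in>space D. \<forall>x x' y y'.
        norm (gy x y s - gy x' y s) \<le> Lf * norm (x - x') \<and>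
        norm (gy x y s - gy x y' s) \<le> Lf * norm (y - y')"
    \<comment> \<open>(A3)\<close>
    and A3_unbiased: "\<forall>x y. integrable D (gx x y) \<and> integrable D (gy x y) \<and>
        Gx x y = (\<integral>s. gx x y s \<partial>D) \<and> Gy x y = (\<integral>s. gy x y s \<partial>D)"
    and A3_var: "\<forall>x y.
        integrable D (\<lambda>s. (norm ((Gx x y, Gy x y) - (gx x y s, gy x y s)))\<^sup>2) \<and>
        (\<integral>s. (norm ((Gx x y, Gy x y) - (gx x y s, gy x y s)))\<^sup>2 \<partial>D) \<le> \<sigma>\<^sup>2"
    and t: "t \<ge> 1"
  shows
   "((\<integral>\<omega>. (norm (msgda_v gx gy \<gamma> lam \<eta> \<alpha> \<beta> x1 y1 (\<lambda>i. \<xi> i \<omega>) (t + 1)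
        - Gy (msgda_x gx gy \<gamma> lam \<eta> \<alpha> \<beta> x1 y1 (\<lambda>i. \<xi> i \<omega>) (t + 1))
             (msgda_y gx gy \<gamma> lam \<eta> \<alpha> \<beta> x1 y1 (\<lambda>i. \<xi> i \<omega>) (t + 1))))\<^sup>2 \<partial>M)
    \<le> (1 - \<alpha> (t + 1)) *
        (\<integral>\<omega>. (norm (msgda_v gx gy \<gamma> lam \<eta> \<alpha> \<beta> x1 y1 (\<lambda>i. \<xi> i \<omega>) t
          - Gy (msgda_x gx gy \<gamma> lam \<eta> \<alpha> \<beta> x1 y1 (\<lambda>i. \<xi> i \<omega>) t)
               (msgda_y gx gy \<gamma> lam \<eta> \<alpha> \<beta> x1 y1 (\<lambda>i. \<xi> i \<omega>) t)))\<^sup>2 \<partial>M)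
      + 2 * (\<alpha> (t + 1))\<^sup>2 * \<sigma>\<^sup>2
      + 4 * Lf\<^sup>2 * (\<eta> t)\<^sup>2 *
        (\<integral>\<omega>. (norm (msgda_xtil gx gy \<gamma> lam \<eta> \<alpha> \<beta> x1 y1 (\<lambda>i. \<xi> i \<omega>) (t + 1)
                   - msgda_x gx gy \<gamma> lam \<eta> \<alpha> \<beta> x1 y1 (\<lambda>i. \<xi> i \<omega>) t))\<^sup>2
              + (norm (msgda_ytil gx gy \<gamma> lam \<eta> \<alpha> \<beta> x1 y1 (\<lambda>i. \<xi> i \<omega>) (t + 1)
                   - msgda_y gx gy \<gamma> lam \<eta> \<alpha> \<beta> x1 y1 (\<lambda>i. \<xi> i \<omega>) t))\<^sup>2 \<partial>M)) \<and>
   ((\<integral>\<omega>. (norm (msgda_w gx gy \<gamma> lam \<eta> \<alpha> \<beta> x1 y1 (\<lambda>i. \<xi> i \<omega>) (t + 1)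
        - Gx (msgda_x gx gy \<gamma> lam \<eta> \<alpha> \<beta> x1 y1 (\<lambda>i. \<xi> i \<omega>) (t + 1))
             (msgda_y gx gy \<gamma> lam \<eta> \<alpha> \<beta> x1 y1 (\<lambda>i. \<xi> i \<omega>) (t + 1))))\<^sup>2 \<partial>M)
    \<le> (1 - \<beta> (t + 1)) *
        (\<integral>\<omega>. (norm (msgda_w gx gy \<gamma> lam \<eta> \<alpha> \<beta> x1 y1 (\<lambda>i. \<xi> i \<omega>) t
          - Gx (msgda_x gx gy \<gamma> lam \<eta> \<alpha> \<beta> x1 y1 (\<lambda>i. \<xi> i \<omega>) t)
               (msgda_y gx gy \<gamma> lam \<eta> \<alpha> \<beta> x1 y1 (\<lambda>i. \<xi> i \<omega>) t)))\<^sup>2 \<partial>M)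
      + 2 * (\<beta> (t + 1))\<^sup>2 * \<sigma>\<^sup>2
      + 4 * Lf\<^sup>2 * (\<eta> t)\<^sup>2 *
        (\<integral>\<omega>. (norm (msgda_xtil gx gy \<gamma> lam \<eta> \<alpha> \<beta> x1 y1 (\<lambda>i. \<xi> i \<omega>) (t + 1)
                   - msgda_x gx gy \<gamma> lam \<eta> \<alpha> \<beta> x1 y1 (\<lambda>i. \<xi> i \<omega>) t))\<^sup>2
              + (norm (msgda_ytil gx gy \<gamma> lam \<eta> \<alpha> \<beta> x1 y1 (\<lambda>i. \<xi> i \<omega>) (t + 1)
                   - msgda_y gx gy \<gamma> lam \<eta> \<alpha> \<beta> x1 y1 (\<lambda>i. \<xi> i \<omega>) t))\<^sup>2 \<partial>M))"
  proof -
  interpret msetup M D \<xi> gx gy Gx Gy \<gamma> lam Lf \<sigma> \<eta> \<alpha> \<beta> x1 y1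
    by (rule msetup.intro[OF M iid_indep iid_distr steps gx_meas gy_meas A2_gx A2_gy A3_unbiased A3_var])
  show ?thesis using main_v[OF t] main_w[OF t] by blast
qed

end
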